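(* For $\lambda\in\mathbb{C}$ (not an eigenvalue of $D_{1,1}$), we can express \[ p_N(-\tau_i;\ \lambda)=\frac{r_i(\lambda)}{s(\lambda)},\quad i=1,\ldots,m, \] where $s$ is a monic polynomial of degree $N$ and $r_i$, $i=1,\ldots,m$, are polynomials of degree smaller than or equal to $N$. Furthermore, \[ s(\lambda)=\det(\lambda I-D_{1,1}) \] and \[ \left[\begin{array}{c} p_N(\theta_{N,-N};\ \lambda)\\ \vdots\\ p_N(\theta_{N,-1};\ \lambda)\end{array}\right]=(\lambda I-D_{1,1})^{-1}D_{1,2}. \]
   Context: Let $\tau_1,\ldots,\tau_m>0$ be delays and $\tau_{\max}=\max_i\tau_i$. Given a positive integer $N$, let $\theta_{N,i}$, $i=-N,\ldots,0$, be $N+1$ distinct points in $[-\tau_{\max},0]$ with $\theta_{N,0}=0$. Let $l_{N,k}$, $k\in\{-N,\ldots,0\}$, be the Lagrange polynomials of degree $N$ on these points ($l_{N,k}(\theta_{N,i})=1$ if $i=k$, $0$ otherwise). Let $D$ be the $(N+1)\times(N+1)$ differentiation matrix with entries $d_{i,k}=l'_{N,k}(\theta_{N,i})$, $i,k\in\{-N,\ldots,0\}$, partitioned as $D=\begin{bmatrix}D_{1,1}&D_{1,2}\\ D_{2,1}&D_{2,2}\end{bmatrix}$, where $D_{1,1}$ is the $N\times N$ block with $i,k\in\{-N,\ldots,-1\}$ and $D_{1,2}$ is the $N\times 1$ column with $i\in\{-N,\ldots,-1\}$, $k=0$. For $\lambda\in\mathbb{C}$, $p_N(\cdot;\lambda)$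 denotes the polynomial of degree $N$ satisfying $p_N(0;\lambda)=1$ and $p_N'(\theta_{N,i};\lambda)=\lambda\, p_N(\theta_{N,i};\lambda)$ for $i\in\{-N,\ldots,-1\}$ (a collocation approximation of $e^{\lambda t}$). *)

theory Defs
  imports "HOL-Computational_Algebra.Polynomial" "Jordan_Normal_Form.Jordan_Normal_Form"
    "Jordan_Normal_Form.Gauss_Jordan_Elimination"
begin

definition lagrange_basis :: "(int \<Rightarrow> real) \<Rightarrow> nat \<Rightarrow> int \<Rightarrow> real poly" where
  "lagrange_basis \<theta> N k =
     (\<Prod>j\<in>{-int N..0} - {k}. Polynomial.smult (1 / (\<theta> k - \<theta> j)) [:- \<theta> j, 1:])"

definition diff_entry :: "(int \<Rightarrow> real) \<Rightarrow> nat \<Rightarrow> int \<Rightarrow> int \<Rightarrow> real" where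
  "diff_entry \<theta> N i k = poly (pderiv (lagrange_basis \<theta> N k)) (\<theta> i)"

text \<open>Block D_{1,1}: row r, column c (0-based) correspond to i = r - N, k = c - N.\<close>
definition D11 :: "(int \<Rightarrow> real) \<Rightarrow> nat \<Rightarrow> real mat" where
  "D11 \<theta> N = mat N N (\<lambda>(r, c). diff_entry \<theta> N (int r - int N) (int c - int N))"

definition D12 :: "(int \<Rightarrow> real) \<Rightarrow> nat \<Rightarrow> real vec" where
  "D12 \<theta> N = vec N (\<lambda>r. diff_entry \<theta> N (int r - int N) 0)"

definition is_collocation_poly :: "(int \<Rightarrow> real) \<Rightarrow> nat \<Rightarrow> complex \<Rightarrow> complex poly \<Rightarrow> bool" where
  "is_collocation_poly \<theta> N lam p \<longleftrightarrow>
     degree p \<le> N \<and> poly p 0 = 1 \<and>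
     (\<forall>i\<in>{-int N..-1}. poly (pderiv p) (of_real (\<theta> i)) = lam * poly p (of_real (\<theta> i)))"

end

theory Submission
  imports Defs
begin

abbreviation "KK N \<equiv> {-int N..(0::int)}"

lemma card_KK: "card (KK N) = Suc N" by simp

lemma lagrange_eval:
  assumes inj: "inj_on \<theta> (KK N)" and j: "j \<in> KK N" and k: "k \<in> KK N"
  shows "poly (lagrange_basis \<theta> N k) (\<theta> j) = (if j = k then 1 else 0)"
proof (cases "j = k")
  case True
  have "poly (lagrange_basis \<theta> N k) (\<theta> j) = (\<Prod>i\<in>KK N - {k}. 1)"
    unfolding lagrange_basis_def poly_prod
  proof (rule prod.cong[OF refl])
    fix i assume i: "i \<in> KK N - {k}"
    then have "\<theta> k \<noteq> \<theta> i" using inj k by (metis DiffE inj_onD singletonI)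
    then show "poly (Polynomial.smult (1 / (\<theta> k - \<theta> i)) [:- \<theta> i, 1:]) (\<theta> j) = 1"
      using True by (simp add: diff_divide_distrib[symmetric])
  qed
  then show ?thesis using True by simp
next
  case False
  have "poly (lagrange_basis \<theta> N k) (\<theta> j) = 0"
    unfolding lagrange_basis_def poly_prod
    by (rule prod_zero, use j False in auto)
  then show ?thesis using False by simp
qed

lemma lagrange_degree: assumes k: "k \<in> KK N" shows "degree (lagrange_basis \<theta> N k) \<le> N"
proof -
  have "degree (lagrange_basis \<theta> N k) \<le> sum (degree \<circ> (\<lambda>i. Polynomial.smult (1 / (\<theta> k - \<theta> i)) [:- \<theta> i, 1:])) (KK N - {k})"
    unfolding lagrange_basis_def by (rule degree_prod_sum_le) simp
  also have "\<dots> \<le> (\<Sum>i\<in>KK N - {k}. 1)"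
    by (rule sum_mono) (simp add: o_def)
  also have "\<dots> = card (KK N - {k})" by simp
  also have "\<dots> \<le> N"
    using k by (simp add: card_Diff_singleton)
  finally show ?thesis .
qed

definition Lc :: "(int \<Rightarrow> real) \<Rightarrow> nat \<Rightarrow> int \<Rightarrow> complex poly" where
  "Lc \<theta> N k = map_poly of_real (lagrange_basis \<theta> N k)"

lemma Lc_degree: "k \<in> KK N \<Longrightarrow> degree (Lc \<theta> N k) \<le> N"
  unfolding Lc_def using lagrange_degree by (metis degree_map_poly_le order_trans)

lemma Lc_smult_degree: "k \<in> KK N \<Longrightarrow> degree (Polynomial.smult c (Lc \<theta> N k)) \<le> N"
  using Lc_degree degree_smult_le order_trans by blast

lemma Lc_eval: "poly (Lc \<theta> N k) (of_real x) = of_real (poly (lagrange_basis \<theta> N k) x)"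
  unfolding Lc_def by (rule of_real_hom.poly_map_poly)

lemma interp_unique:
  fixes p q :: "complex poly"
  assumes inj: "inj_on \<theta> (KK N)" and "degree p \<le> N" "degree q \<le> N"
    and eq: "\<And>k. k \<in> KK N \<Longrightarrow> poly p (of_real (\<theta> k)) = poly q (of_real (\<theta> k))"
  shows "p = q"
proof -
  have inj2: "inj_on (\<lambda>k. complex_of_real (\<theta> k)) (KK N)"
    using inj by (auto simp: inj_on_def)
  have c: "card ((\<lambda>k. complex_of_real (\<theta> k)) ` KK N) = Suc N"
    using card_image[OF inj2] by simp
  show ?thesis
    by (rule poly_eqI_degree[of "(\<lambda>k. complex_of_real (\<theta> k)) ` KK N"], use eq c assms in auto)
qed

lemma expansion:
  fixes p :: "complex poly"
  assumes inj: "inj_on \<theta> (KK N)" and dp: "degree p \<le> N"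
  shows "p = (\<Sum>k\<in>KK N. Polynomial.smult (poly p (of_real (\<theta> k))) (Lc \<theta> N k))"
proof (rule interp_unique[OF inj dp])
  show "degree (\<Sum>k\<in>KK N. Polynomial.smult (poly p (of_real (\<theta> k))) (Lc \<theta> N k)) \<le> N"
    by (rule degree_sum_le) (auto intro: Lc_smult_degree simp: Lc_degree)
  fix j assume j: "j \<in> KK N"
  have "poly (\<Sum>k\<in>KK N. Polynomial.smult (poly p (of_real (\<theta> k))) (Lc \<theta> N k)) (of_real (\<theta> j))
     = (\<Sum>k\<in>KK N. poly p (of_real (\<theta> k)) * (if j = k then 1 else 0))"
    unfolding poly_sum poly_smult Lc_eval
    by (rule sum.cong[OF refl]) (simp add: lagrange_eval[OF inj j])
  also have "\<dots> = poly p (of_real (\<theta> j))" using j by (simp add: if_distrib cong: if_cong)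
  finally show "poly p (of_real (\<theta> j)) = poly (\<Sum>k\<in>KK N. Polynomial.smult (poly p (of_real (\<theta> k))) (Lc \<theta> N k)) (of_real (\<theta> j))" by simp
qed

lemma deriv_formula:
  fixes p :: "complex poly"
  assumes inj: "inj_on \<theta> (KK N)" and dp: "degree p \<le> N"
  shows "poly (pderiv p) (of_real (\<theta> i)) = (\<Sum>k\<in>KK N. poly p (of_real (\<theta> k)) * of_real (diff_entry \<theta> N i k))"
proof -
  have "pderiv p = (\<Sum>k\<in>KK N. Polynomial.smult (poly p (of_real (\<theta> k))) (pderiv (Lc \<theta> N k)))"
    by (subst expansion[OF inj dp]) (simp add: pderiv_sum pderiv_smult)
  then show ?thesis
    unfolding diff_entry_def
    by (simp add: poly_sum Lc_def of_real_hom.map_poly_pderiv[symmetric] of_real_hom.poly_map_poly)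
qed


lemma split_sum: fixes f :: "int \<Rightarrow> 'a::comm_monoid_add" shows "(\<Sum>k\<in>KK N. f k) = (\<Sum>j<N. f (int j - int N)) + f 0"
proof -
  have e: "KK N = insert 0 ((\<lambda>j. int j - int N) ` {..<N})"
  proof (rule Set.set_eqI)
    fix k
    show "k \<in> KK N \<longleftrightarrow> k \<in> insert 0 ((\<lambda>j. int j - int N) ` {..<N})"
    proof
      assume k: "k \<in> KK N"
      show "k \<in> insert 0 ((\<lambda>j. int j - int N) ` {..<N})"
      proof (cases "k = 0")
        case False
        then have "k = int (nat (k + int N)) - int N" "nat (k + int N) \<in> {..<N}" using k by auto
        then show ?thesis by (intro insertI2 image_eqI)
      qed simp
    qed auto
  qed
  have inj: "inj_on (\<lambda>j. int j - int N) {..<N}" by (auto simp: inj_on_def)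
  have "0 \<notin> (\<lambda>j. int j - int N) ` {..<N}" by auto
  then have "(\<Sum>k\<in>KK N. f k) = f 0 + sum f ((\<lambda>j. int j - int N) ` {..<N})"
    unfolding e by (simp add: sum.insert)
  also have "sum f ((\<lambda>j. int j - int N) ` {..<N}) = (\<Sum>j<N. f (int j - int N))"
    by (simp add: sum.reindex[OF inj])
  finally show ?thesis by (simp add: add.commute)
qed

lemma mult_entry:
  fixes M :: "complex mat"
  assumes M: "M \<in> carrier_mat N N" and P: "P \<in> carrier_vec N" and j: "j < N"
  shows "((lam \<cdot>\<^sub>m 1\<^sub>m N - M) *\<^sub>v P) $ j = lam * P $ j - (\<Sum>l<N. M $$ (j, l) * P $ l)"
proof -
  have "((lam \<cdot>\<^sub>m 1\<^sub>m N - M) *\<^sub>v P) $ j = (\<Sum>l<N. (lam * (if j = l then 1 else 0) - M $$ (j, l)) * P $ l)"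
    using M P j by (auto simp: mult_mat_vec_def scalar_prod_def lessThan_atLeast0 intro!: sum.cong)
  also have "\<dots> = (\<Sum>l<N. (if j = l then lam * P $ l else 0)) - (\<Sum>l<N. M $$ (j, l) * P $ l)"
    unfolding sum_subtractf[symmetric] by (rule sum.cong) (auto simp: algebra_simps)
  also have "\<dots> = lam * P $ j - (\<Sum>l<N. M $$ (j, l) * P $ l)"
    using j by simp
  finally show ?thesis .
qed

lemma colloc_iff:
  assumes inj: "inj_on \<theta> (KK N)" and t0: "\<theta> 0 = 0"
    and dp: "degree p \<le> N" and p0: "poly p 0 = 1"
  shows "is_collocation_poly \<theta> N lam p \<longleftrightarrow>
     (lam \<cdot>\<^sub>m 1\<^sub>m N - map_mat complex_of_real (D11 \<theta> N)) *\<^sub>v vec N (\<lambda>j. poly p (of_real (\<theta> (int j - int N))))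
       = map_vec complex_of_real (D12 \<theta> N)"
proof -
  let ?M = "map_mat complex_of_real (D11 \<theta> N)"
  let ?P = "vec N (\<lambda>j. poly p (of_real (\<theta> (int j - int N))))"
  let ?d = "map_vec complex_of_real (D12 \<theta> N)"
  have M: "?M \<in> carrier_mat N N" by (simp add: D11_def)
  have P: "?P \<in> carrier_vec N" by simp
  have key: "(poly (pderiv p) (of_real (\<theta> (int j - int N))) = lam * poly p (of_real (\<theta> (int j - int N))))
      \<longleftrightarrow> ((lam \<cdot>\<^sub>m 1\<^sub>m N - ?M) *\<^sub>v ?P) $ j = ?d $ j" if j: "j < N" for j
  proof -
    let ?i = "int j - int N"
    have lin: "\<And>a b S d L::complex. a = S + d \<Longrightarrow> b = L - S \<Longrightarrow> (a = L) \<longleftrightarrow> (b = d)" by auto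
    have A: "poly (pderiv p) (of_real (\<theta> ?i)) = (\<Sum>l<N. ?P $ l * of_real (diff_entry \<theta> N ?i (int l - int N))) + ?d $ j"
      unfolding deriv_formula[OF inj dp] split_sum using j t0 p0 by (simp add: D12_def)
    have B: "(\<Sum>l<N. ?P $ l * of_real (diff_entry \<theta> N ?i (int l - int N))) = (\<Sum>l<N. ?M $$ (j, l) * ?P $ l)"
      using j by (auto simp: D11_def intro!: sum.cong)
    have C: "((lam \<cdot>\<^sub>m 1\<^sub>m N - ?M) *\<^sub>v ?P) $ j = lam * poly p (of_real (\<theta> ?i)) - (\<Sum>l<N. ?M $$ (j, l) * ?P $ l)"
      using mult_entry[OF M P j] j by simp
    show ?thesis by (rule lin[OF A[unfolded B] C])
  qed
  have iff1: "(\<forall>i\<in>{-int N..-1}. poly (pderiv p) (of_real (\<theta> i)) = lam * poly p (of_real (\<theta> i)))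
     \<longleftrightarrow> (\<forall>j<N. poly (pderiv p) (of_real (\<theta> (int j - int N))) = lam * poly p (of_real (\<theta> (int j - int N))))"
  proof
    assume "\<forall>i\<in>{-int N..-1}. poly (pderiv p) (of_real (\<theta> i)) = lam * poly p (of_real (\<theta> i))"
    then show "\<forall>j<N. poly (pderiv p) (of_real (\<theta> (int j - int N))) = lam * poly p (of_real (\<theta> (int j - int N)))"
      by auto
  next
    assume H: "\<forall>j<N. poly (pderiv p) (of_real (\<theta> (int j - int N))) = lam * poly p (of_real (\<theta> (int j - int N)))"
    show "\<forall>i\<in>{-int N..-1}. poly (pderiv p) (of_real (\<theta> i)) = lam * poly p (of_real (\<theta> i))"
    proof
      fix i assume i: "i \<in> {-int N..-1}"
      then have "i = int (nat (i + int N)) - int N" "nat (i + int N) < N" by auto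
      then show "poly (pderiv p) (of_real (\<theta> i)) = lam * poly p (of_real (\<theta> i))"
        using H by metis
    qed
  qed
  have iff2: "(\<forall>j<N. ((lam \<cdot>\<^sub>m 1\<^sub>m N - ?M) *\<^sub>v ?P) $ j = ?d $ j) \<longleftrightarrow> (lam \<cdot>\<^sub>m 1\<^sub>m N - ?M) *\<^sub>v ?P = ?d"
  proof
    assume "\<forall>j<N. ((lam \<cdot>\<^sub>m 1\<^sub>m N - ?M) *\<^sub>v ?P) $ j = ?d $ j"
    then show "(lam \<cdot>\<^sub>m 1\<^sub>m N - ?M) *\<^sub>v ?P = ?d"
      by (intro eq_vecI) (auto simp: D12_def D11_def)
  next
    assume eq: "(lam \<cdot>\<^sub>m 1\<^sub>m N - ?M) *\<^sub>v ?P = ?d"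
    show "\<forall>j<N. ((lam \<cdot>\<^sub>m 1\<^sub>m N - ?M) *\<^sub>v ?P) $ j = ?d $ j"
      by (intro allI impI) (simp only: eq)
  qed
  show ?thesis
    unfolding is_collocation_poly_def iff1 iff2[symmetric] using key dp p0 by auto
qed

theorem proposition3:
  fixes N m :: nat and \<tau> :: "nat \<Rightarrow> real" and \<theta> :: "int \<Rightarrow> real"
  assumes "N \<ge> 1" and "m \<ge> 1"
    and "\<forall>i\<in>{1..m}. \<tau> i > 0"
    and "inj_on \<theta> {-int N..0}"
    and "\<forall>i\<in>{-int N..0}. - Max (\<tau> ` {1..m}) \<le> \<theta> i \<and> \<theta> i \<le> 0"
    and "\<theta> 0 = 0"
  shows "\<exists>(s :: complex poly) (r :: nat \<Rightarrow> complex poly).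
     degree s = N \<and> lead_coeff s = 1 \<and>
     (\<forall>i\<in>{1..m}. degree (r i) \<le> N) \<and>
     (\<forall>lam. poly s lam = det (lam \<cdot>\<^sub>m 1\<^sub>m N - map_mat complex_of_real (D11 \<theta> N))) \<and>
     (\<forall>lam. \<not> eigenvalue (map_mat complex_of_real (D11 \<theta> N)) lam \<longrightarrow>
        (\<exists>!p. is_collocation_poly \<theta> N lam p) \<and>
        (\<forall>p. is_collocation_poly \<theta> N lam p \<longrightarrow>
           (\<forall>i\<in>{1..m}. poly p (of_real (- \<tau> i)) = poly (r i) lam / poly s lam) \<and>
           mat_inverse (lam \<cdot>\<^sub>m 1\<^sub>m N - map_mat complex_of_real (D11 \<theta> N)) \<noteq> None \<and>
           vec N (\<lambda>j. poly p (of_real (\<theta> (int j - int N)))) =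
             the (mat_inverse (lam \<cdot>\<^sub>m 1\<^sub>m N - map_mat complex_of_real (D11 \<theta> N)))
               *\<^sub>v map_vec complex_of_real (D12 \<theta> N)))"
proof -
  note inj = assms(4) and t0 = assms(6)
  let ?M = "map_mat complex_of_real (D11 \<theta> N)"
  let ?d = "map_vec complex_of_real (D12 \<theta> N)"
  have M: "?M \<in> carrier_mat N N" by (simp add: D11_def)
  have dc: "?d \<in> carrier_vec N" by (simp add: D12_def)
  define s where "s = char_poly ?M"
  have s_deg: "degree s = N" and s_lc: "lead_coeff s = 1"
    using degree_monic_char_poly[OF M] unfolding s_def by auto
  have s_eval: "poly s lam = det (lam \<cdot>\<^sub>m 1\<^sub>m N - ?M)" for lam
    unfolding s_def char_poly_def
    by (rule poly_det_cong[of _ N], use M in \<open>auto simp: char_poly_matrix_def\<close>)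
  define C where "C j = replace_col (char_poly_matrix ?M) (map_vec (\<lambda>a. [:a:]) ?d) j" for j
  have C_eval: "poly (det (C j)) lam = det (replace_col (lam \<cdot>\<^sub>m 1\<^sub>m N - ?M) ?d j)" for j lam
    unfolding C_def
    by (rule poly_det_cong[of _ N], use M dc in \<open>auto simp: char_poly_matrix_def replace_col_def\<close>)
  have C_deg: "degree (det (C j)) \<le> N" for j
  proof -
    have "degree (det (C j)) \<le> 1 * N"
      by (rule degree_det_le, use M dc in \<open>auto simp: C_def char_poly_matrix_def replace_col_def\<close>)
    then show ?thesis by simp
  qed
  define ell where "ell i k = poly (Lc \<theta> N k) (of_real (- \<tau> i))" for i k
  define r where "r i = (\<Sum>j<N. Polynomial.smult (ell i (int j - int N)) (det (C j))) + Polynomial.smult (ell i 0) s" for i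
  have r_deg: "degree (r i) \<le> N" for i
    unfolding r_def
    by (intro degree_add_le degree_sum_le order_trans[OF degree_smult_le]) (auto simp: C_deg s_deg)
  have main: "(\<exists>!p. is_collocation_poly \<theta> N lam p) \<and>
        (\<forall>p. is_collocation_poly \<theta> N lam p \<longrightarrow>
           (\<forall>i\<in>{1..m}. poly p (of_real (- \<tau> i)) = poly (r i) lam / poly s lam) \<and>
           mat_inverse (lam \<cdot>\<^sub>m 1\<^sub>m N - ?M) \<noteq> None \<and>
           vec N (\<lambda>j. poly p (of_real (\<theta> (int j - int N)))) =
             the (mat_inverse (lam \<cdot>\<^sub>m 1\<^sub>m N - ?M)) *\<^sub>v ?d)"
    if ne: "\<not> eigenvalue ?M lam" for lam
  proof -
    let ?A = "lam \<cdot>\<^sub>m 1\<^sub>m N - ?M"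
    have A: "?A \<in> carrier_mat N N" by (rule minus_carrier_mat[OF M])
    have sne: "poly s lam \<noteq> 0" using ne eigenvalue_root_char_poly[OF M] unfolding s_def by simp
    then have "det ?A \<noteq> 0" by (simp add: s_eval)
    then have U: "?A \<in> Units (ring_mat TYPE(complex) N ())" by (rule det_non_zero_imp_unit[OF A])
    have "mat_inverse ?A \<noteq> None"
    proof
      assume "mat_inverse ?A = None"
      from mat_inverse(1)[OF A this, of "()"] U show False by contradiction
    qed
    then obtain B where Bdef: "mat_inverse ?A = Some B" by blast
    from mat_inverse(2)[OF A Bdef] have AB: "?A * B = 1\<^sub>m N" and BA: "B * ?A = 1\<^sub>m N"
      and B: "B \<in> carrier_mat N N" by auto
    define Pv where "Pv p = vec N (\<lambda>j. poly p (of_real (\<theta> (int j - int N))))" for p :: "complex poly"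
    have Pv_c: "Pv p \<in> carrier_vec N" for p unfolding Pv_def by simp
    have p0_of: "poly p 0 = 1" if "is_collocation_poly \<theta> N lam p" for p
      using that unfolding is_collocation_poly_def by simp
    have deg_of: "degree p \<le> N" if "is_collocation_poly \<theta> N lam p" for p
      using that unfolding is_collocation_poly_def by simp
    have AP: "?A *\<^sub>v Pv p = ?d" if "is_collocation_poly \<theta> N lam p" for p
      using colloc_iff[OF inj t0 deg_of[OF that] p0_of[OF that]] that unfolding Pv_def by simp
    have PB: "Pv p = B *\<^sub>v ?d" if "is_collocation_poly \<theta> N lam p" for p
    proof -
      have "B *\<^sub>v ?d = B *\<^sub>v (?A *\<^sub>v Pv p)" using AP[OF that] by simp
      also have "\<dots> = (B * ?A) *\<^sub>v Pv p" using assoc_mult_mat_vec[OF B A Pv_c] by simp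
      also have "\<dots> = Pv p" using BA Pv_c by simp
      finally show ?thesis by simp
    qed
    define P0 where "P0 = B *\<^sub>v ?d"
    have P0c: "P0 \<in> carrier_vec N" using B dc unfolding P0_def by simp
    define q where "q = (\<Sum>l<N. Polynomial.smult (P0 $ l) (Lc \<theta> N (int l - int N))) + Lc \<theta> N 0"
    have q_deg: "degree q \<le> N"
      unfolding q_def
      by (intro degree_add_le degree_sum_le Lc_smult_degree Lc_degree) auto
    have q_eval: "poly q (of_real (\<theta> k)) = (\<Sum>l<N. P0 $ l * (if k = int l - int N then 1 else 0)) + (if k = 0 then 1 else 0)"
      if k: "k \<in> KK N" for k
      unfolding q_def poly_add poly_sum poly_smult Lc_eval
      using lagrange_eval[OF inj k] k by (auto intro!: sum.cong)
    have q_nodes: "poly q (of_real (\<theta> (int j - int N))) = P0 $ j" if "j < N" for j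
    proof -
      have "poly q (of_real (\<theta> (int j - int N))) = (\<Sum>l<N. P0 $ l * (if int j - int N = int l - int N then 1 else 0))"
        using q_eval[of "int j - int N"] that by simp
      also have "\<dots> = (\<Sum>l<N. if l = j then P0 $ l else 0)" by (rule sum.cong) auto
      also have "\<dots> = P0 $ j" using that by simp
      finally show ?thesis .
    qed
    have q0: "poly q 0 = 1"
    proof -
      have "poly q (of_real (\<theta> 0)) = 1" using q_eval[of 0] by simp
      then show ?thesis using t0 by simp
    qed
    have Pq: "Pv q = P0" unfolding Pv_def using P0c q_nodes by (intro eq_vecI) auto
    have "?A *\<^sub>v P0 = ?d"
    proof -
      have "?A *\<^sub>v P0 = (?A * B) *\<^sub>v ?d" unfolding P0_def using assoc_mult_mat_vec[OF A B dc] by simp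
      also have "\<dots> = ?d" using AB dc by simp
      finally show ?thesis .
    qed
    then have q_col: "is_collocation_poly \<theta> N lam q"
      using colloc_iff[OF inj t0 q_deg q0] Pq unfolding Pv_def by simp
    have uniq: "p = q" if "is_collocation_poly \<theta> N lam p" for p
    proof (rule interp_unique[OF inj deg_of[OF that] q_deg])
      fix k assume k: "k \<in> KK N"
      show "poly p (of_real (\<theta> k)) = poly q (of_real (\<theta> k))"
      proof (cases "k = 0")
        case True then show ?thesis using t0 p0_of[OF that] q0 by simp
      next
        case False
        then have kk: "k = int (nat (k + int N)) - int N" "nat (k + int N) < N" using k by auto
        have "Pv p $ nat (k + int N) = Pv q $ nat (k + int N)"
          using PB[OF that] PB[OF q_col] by simp
        then show ?thesis using kk unfolding Pv_def by (metis index_vec)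
      qed
    qed
    have ex1: "\<exists>!p. is_collocation_poly \<theta> N lam p"
      using q_col uniq by blast
    have formula: "poly p (of_real (- \<tau> i)) = poly (r i) lam / poly s lam"
      if col: "is_collocation_poly \<theta> N lam p" for p i
    proof -
      have "poly p (of_real (- \<tau> i)) = (\<Sum>k\<in>KK N. poly p (of_real (\<theta> k)) * ell i k)"
        by (subst expansion[OF inj deg_of[OF col]]) (simp add: poly_sum ell_def)
      also have "\<dots> = (\<Sum>j<N. Pv p $ j * ell i (int j - int N)) + ell i 0"
        unfolding split_sum using t0 p0_of[OF col] by (simp add: Pv_def)
      finally have e1: "poly p (of_real (- \<tau> i)) = (\<Sum>j<N. Pv p $ j * ell i (int j - int N)) + ell i 0" .
      have cr: "poly (det (C j)) lam = Pv p $ j * poly s lam" if j: "j < N" for j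
        using cramer_lemma_mat[OF A Pv_c j, of p] AP[OF col] C_eval s_eval by simp
      have "poly (r i) lam = (\<Sum>j<N. ell i (int j - int N) * (Pv p $ j * poly s lam)) + ell i 0 * poly s lam"
        unfolding r_def poly_add poly_sum poly_smult using cr by simp
      also have "\<dots> = poly p (of_real (- \<tau> i)) * poly s lam"
        unfolding e1 by (simp add: algebra_simps sum_distrib_left)
      finally show ?thesis using sne by simp
    qed
    show ?thesis
      using ex1 formula PB Bdef unfolding Pv_def by auto
  qed
  show ?thesis
    by (rule exI[of _ s], rule exI[of _ r]) (use s_deg s_lc r_deg s_eval main in auto)
qed

end
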